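(* Suppose $(A,B)$ is controllable. For each $M>0$ let $\hat x_M\in C([0,T],\mathbb R^n)$ be a path, and suppose the family $\{\hat x_M\}_{M>0}$ is uniformly bounded with respect to $M$ in the norm $\big(\int_0^T\|\cdot\|^2dt\big)^{1/2}$. Consider finitely many agents with fixed initial states $x_1^0,\dots,x_N^0$, each applying, for the given $M$, the optimal tracking control law of $\hat x_M$ (i.e. $u_i^*=-\frac1rB^T(\Gamma x_i+\beta_j)$ if $x_i^0\in D_j(\hat x_M)$, with $\Gamma,\beta_j,D_j$ computed with terminal weight $M$ and tracked path $\hat x_M$). Then for every $\epsilon>0$ there exists $M_0>0$ such that for all $M>M_0$, every agent's state at time $T$ lies in a ball of radius $\epsilon$ centered at one of the points $p_1,\dots,p_l$.
   Context: Agents have dynamics $\dot x_i=Ax_i+Bu_i$, $x_i(0)=x_i^0$, with $A\in\mathbb R^{n\times n}$, $B\in\mathbb R^{n\times m}$; constants $q,r,M>0$, horizon $T>0$, destinations $p_1,\dots,p_l\in\mathbb R^n$. For a tracked path $\hat x$ and a given $M$, $\Gamma,\beta_k,\delta_k$ are the unique solutions on $[0,T]$ of $\dot\Gamma-\frac1r\Gamma BB^T\Gamma+\Gamma A+A^T\Gamma+qI_n=0$, $\Gamma(T)=MI_n$; $\dot\beta_k=(\frac1r\Gamma BB^T-A^T)\beta_k+q\hat x$, $\beta_k(T)=-Mp_k$; $\dot\delta_k=\frac1{2r}\beta_k^TBB^T\beta_k-\frac q2\hat x^T\hat x$, $\delta_k(T)=\frac M2p_k^Tp_k$. Basins: $D_j(\hat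 x)=\{x:(\beta_j(0)-\beta_k(0))^Tx\le\delta_k(0)-\delta_j(0)\ \forall k\}$, with ties broken in favor of the smallest index $j$. This control law is the optimal control for the cost $\int_0^T\{\frac q2\|x_i-\hat x\|^2+\frac r2\|u_i\|^2\}dt+\frac M2\min_j\|x_i(T)-p_j\|^2$. *)

theory Defs
  imports "HOL-Analysis.Analysis"
begin

text \<open>Kalman controllability: the columns of B, AB, ..., A^(n-1)B span R^n,
  i.e. the controllability matrix [B, AB, ..., A^(n-1) B] has rank n.\<close>
definition controllable :: "real^'n^'n \<Rightarrow> real^'m^'n \<Rightarrow> bool" where
  "controllable A B \<longleftrightarrow>
     span (\<Union>k<CARD('n). range (\<lambda>v. (((*v) A) ^^ k) (B *v v))) = (UNIV :: (real^'n) set)"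

text \<open>Basin D_j, given beta_k(0) (b0 k) and delta_k(0) (d0 k), destinations indexed 1..l.\<close>
definition basin :: "nat \<Rightarrow> (nat \<Rightarrow> real^'n) \<Rightarrow> (nat \<Rightarrow> real) \<Rightarrow> nat \<Rightarrow> (real^'n) set" where
  "basin l b0 d0 j = {x. \<forall>k\<in>{1..l}. (b0 j - b0 k) \<bullet> x \<le> d0 k - d0 j}"

text \<open>Index of the basin containing x, ties broken in favour of the smallest index.\<close>
definition basin_index :: "nat \<Rightarrow> (nat \<Rightarrow> real^'n) \<Rightarrow> (nat \<Rightarrow> real) \<Rightarrow> real^'n \<Rightarrow> nat" where
  "basin_index l b0 d0 x = (LEAST j. j \<in> {1..l} \<and> x \<in> basin l b0 d0 j)"

end

theory Submission
  imports Defs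
begin

lemma dot_tr: fixes A :: "real^'m^'n" shows "x \<bullet> (A *v y) = (transpose A *v x) \<bullet> y"
  by (simp add: dot_lmul_matrix)

lemma real_id:
  fixes r q ta tb tc td te tf tg th ti tj tk :: real
  assumes "r \<noteq> 0"
  shows "ta + tb + (1/2) * ((1/r) * tc - 2 * ta - q * td) + ((1/r) * te - tf + q * tg) + (tf + th)
    + ((1 / (2*r)) * ti - (q/2) * tj)
   = - ((q/2) * (td - 2 * tg + tj) + (r/2) * tk) + (r/2) * (tk + (2/r) * tb + (2/r) * th + (1/r)^2 * (tc + 2 * te + ti))"
  using assms by (simp add: field_simps power2_eq_square)

lemma alg:
  fixes A G Gd :: "real^'n^'n" and B :: "real^'m^'n" and y xh b bd :: "real^'n" and uu :: "real^'m"
  assumes sym: "transpose G = G" and r: "r \<noteq> 0"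
  and Gd: "Gd = (1/r) *\<^sub>R (G ** B ** transpose B ** G) - G ** A - transpose A ** G - q *\<^sub>R mat 1"
  and bd: "bd = ((1/r) *\<^sub>R (G ** B ** transpose B) - transpose A) *v b + q *\<^sub>R xh"
  and dd: "dd = (1 / (2*r)) * (b \<bullet> ((B ** transpose B) *v b)) - (q/2) * (xh \<bullet> xh)"
  shows "(G *v y) \<bullet> (A *v y + B *v uu) + (1/2) * (y \<bullet> (Gd *v y)) + bd \<bullet> y + b \<bullet> (A *v y + B *v uu) + dd
     = - ((q/2) * (norm (y - xh))\<^sup>2 + (r/2) * (norm uu)\<^sup>2) + (r/2) * (norm (uu + (1/r) *\<^sub>R (transpose B *v (G *v y + b))))\<^sup>2"
proof -
  define P where "P = transpose B *v (G *v y)"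
  define Q where "Q = transpose B *v b"
  have e1: "(G *v y) \<bullet> (B *v uu) = P \<bullet> uu" unfolding P_def by (rule dot_tr)
  have f1: "y \<bullet> ((G ** B ** transpose B ** G) *v y) = P \<bullet> P"
  proof -
    have "y \<bullet> ((G ** B ** transpose B ** G) *v y) = y \<bullet> (G *v (B *v (transpose B *v (G *v y))))"
      by (simp only: matrix_vector_mul_assoc matrix_mul_assoc)
    also have "\<dots> = (G *v y) \<bullet> (B *v P)" unfolding P_def by (subst dot_tr) (simp only: sym)
    also have "\<dots> = P \<bullet> P" unfolding P_def by (rule dot_tr)
    finally show ?thesis .
  qed
  have f2: "y \<bullet> ((G ** A) *v y) = (G *v y) \<bullet> (A *v y)"
  proof -
    have "y \<bullet> ((G ** A) *v y) = y \<bullet> (G *v (A *v y))" by (simp only: matrix_vector_mul_assoc)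
    also have "\<dots> = (G *v y) \<bullet> (A *v y)" by (subst dot_tr) (simp only: sym)
    finally show ?thesis .
  qed
  have f3: "y \<bullet> ((transpose A ** G) *v y) = (G *v y) \<bullet> (A *v y)"
  proof -
    have "y \<bullet> ((transpose A ** G) *v y) = y \<bullet> (transpose A *v (G *v y))" by (simp only: matrix_vector_mul_assoc)
    also have "\<dots> = (A *v y) \<bullet> (G *v y)" by (subst dot_tr) (simp only: transpose_transpose)
    finally show ?thesis by (simp only: inner_commute)
  qed
  have e2: "y \<bullet> (Gd *v y) = (1/r) * (P \<bullet> P) - 2 * ((G *v y) \<bullet> (A *v y)) - q * (y \<bullet> y)"
    unfolding Gd
    by (simp add: matrix_vector_mult_diff_rdistrib scaleR_matrix_vector_assoc[symmetric] inner_diff_right f1 f2 f3)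
  have g1: "((G ** B ** transpose B) *v b) \<bullet> y = Q \<bullet> P"
  proof -
    have "((G ** B ** transpose B) *v b) \<bullet> y = y \<bullet> (G *v (B *v Q))"
      unfolding Q_def by (simp only: matrix_vector_mul_assoc matrix_mul_assoc inner_commute)
    also have "\<dots> = (G *v y) \<bullet> (B *v Q)" by (subst dot_tr) (simp only: sym)
    also have "\<dots> = P \<bullet> Q" unfolding P_def by (rule dot_tr)
    finally show ?thesis by (simp only: inner_commute)
  qed
  have g2: "(transpose A *v b) \<bullet> y = b \<bullet> (A *v y)" by (simp only: dot_tr)
  have e3: "bd \<bullet> y = (1/r) * (Q \<bullet> P) - b \<bullet> (A *v y) + q * (xh \<bullet> y)"
    unfolding bd
    by (simp add: matrix_vector_mult_diff_rdistrib scaleR_matrix_vector_assoc[symmetric] inner_diff_left inner_add_left g1 dot_lmul_matrix)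
  have e4: "b \<bullet> ((B ** transpose B) *v b) = Q \<bullet> Q"
  proof -
    have "b \<bullet> ((B ** transpose B) *v b) = b \<bullet> (B *v Q)" unfolding Q_def by (simp only: matrix_vector_mul_assoc)
    also have "\<dots> = Q \<bullet> Q" unfolding Q_def by (rule dot_tr)
    finally show ?thesis .
  qed
  have e5: "b \<bullet> (B *v uu) = Q \<bullet> uu" unfolding Q_def by (rule dot_tr)
  have n: "(norm (uu + (1/r) *\<^sub>R (transpose B *v (G *v y + b))))\<^sup>2 = (uu + (1/r) *\<^sub>R (P + Q)) \<bullet> (uu + (1/r) *\<^sub>R (P + Q))"
    by (simp add: P_def Q_def matrix_vector_right_distrib power2_norm_eq_inner)
  have n2: "(norm (y - xh))\<^sup>2 = y \<bullet> y - 2 * (xh \<bullet> y) + xh \<bullet> xh"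
    by (simp add: power2_norm_eq_inner inner_diff_left inner_diff_right inner_commute)
  have n3: "(uu + (1/r) *\<^sub>R (P + Q)) \<bullet> (uu + (1/r) *\<^sub>R (P + Q)) = uu \<bullet> uu + (2/r) * (P \<bullet> uu) + (2/r) * (Q \<bullet> uu)
     + (1/r)^2 * (P \<bullet> P + 2 * (Q \<bullet> P) + Q \<bullet> Q)"
    by (simp add: inner_add_left inner_add_right inner_commute power2_eq_square algebra_simps)
  have nn: "(norm (uu + (1/r) *\<^sub>R (transpose B *v (G *v y + b))))\<^sup>2 = uu \<bullet> uu + (2/r) * (P \<bullet> uu) + (2/r) * (Q \<bullet> uu)
     + (1/r)^2 * (P \<bullet> P + 2 * (Q \<bullet> P) + Q \<bullet> Q)" using n n3 by simp
  have nu: "(norm uu)\<^sup>2 = uu \<bullet> uu" by (simp add: power2_norm_eq_inner)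
  show ?thesis
    apply (unfold nn nu n2 inner_add_right e1 e2 e3 e5 dd e4)
    using real_id[where q=q and ta = "(G *v y) \<bullet> (A *v y)" and tb = "P \<bullet> uu" and tc = "P \<bullet> P" and td = "y \<bullet> y" and te = "Q \<bullet> P" and tf = "b \<bullet> (A *v y)" and tg = "xh \<bullet> y" and th = "Q \<bullet> uu" and ti = "Q \<bullet> Q" and tj = "xh \<bullet> xh" and tk = "uu \<bullet> uu", OF r] by argo
qed

lemma bb_mv: "bounded_bilinear (\<lambda>(M::real^'n^'m) (v::real^'n). M *v v)"
proof -
  have "bilinear (\<lambda>(M::real^'n^'m) (v::real^'n). M *v v)"
    unfolding bilinear_def
    by (auto intro!: linearI simp: matrix_vector_right_distrib matrix_vector_mult_add_rdistrib
        scaleR_matrix_vector_assoc matrix_vector_mult_scaleR)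
  then show ?thesis using bilinear_conv_bounded_bilinear by blast
qed

lemma value_deriv:
  fixes A :: "real^'n^'n" and B :: "real^'m^'n" and G :: "real \<Rightarrow> real^'n^'n"
    and b y :: "real \<Rightarrow> real^'n" and d :: "real \<Rightarrow> real" and u :: "real^'m"
  assumes sym: "transpose (G t) = G t" and r: "r \<noteq> 0"
  and G': "(G has_vector_derivative ((1/r) *\<^sub>R (G t ** B ** transpose B ** G t) - G t ** A - transpose A ** G t - q *\<^sub>R mat 1)) (at t within S)"
  and b': "(b has_vector_derivative (((1/r) *\<^sub>R (G t ** B ** transpose B) - transpose A) *v b t + q *\<^sub>R xh)) (at t within S)"
  and d': "(d has_real_derivative ((1 / (2*r)) * (b t \<bullet> ((B ** transpose B) *v b t)) - (q/2) * (xh \<bullet> xh))) (at t within S)"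
  and y': "(y has_vector_derivative (A *v y t + B *v u)) (at t within S)"
  shows "((\<lambda>s. (1/2) * (y s \<bullet> (G s *v y s)) + b s \<bullet> y s + d s) has_real_derivative
     (- ((q/2) * (norm (y t - xh))\<^sup>2 + (r/2) * (norm u)\<^sup>2) + (r/2) * (norm (u + (1/r) *\<^sub>R (transpose B *v (G t *v y t + b t))))\<^sup>2)) (at t within S)"
proof -
  define Gd where "Gd = (1/r) *\<^sub>R (G t ** B ** transpose B ** G t) - G t ** A - transpose A ** G t - q *\<^sub>R mat 1"
  define bd where "bd = ((1/r) *\<^sub>R (G t ** B ** transpose B) - transpose A) *v b t + q *\<^sub>R xh"
  define dd where "dd = (1 / (2*r)) * (b t \<bullet> ((B ** transpose B) *v b t)) - (q/2) * (xh \<bullet> xh)"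
  define yd where "yd = A *v y t + B *v u"
  have Gy: "((\<lambda>s. G s *v y s) has_vector_derivative (G t *v yd + Gd *v y t)) (at t within S)"
    using bounded_bilinear.has_vector_derivative[OF bb_mv G'[folded Gd_def] y'[folded yd_def]] .
  have yGy: "((\<lambda>s. y s \<bullet> (G s *v y s)) has_vector_derivative (y t \<bullet> (G t *v yd + Gd *v y t) + yd \<bullet> (G t *v y t))) (at t within S)"
    using bounded_bilinear.has_vector_derivative[OF bounded_bilinear_inner y'[folded yd_def] Gy] .
  have by': "((\<lambda>s. b s \<bullet> y s) has_vector_derivative (b t \<bullet> yd + bd \<bullet> y t)) (at t within S)"
    using bounded_bilinear.has_vector_derivative[OF bounded_bilinear_inner b'[folded bd_def] y'[folded yd_def]] .
  have tot: "((\<lambda>s. (1/2) * (y s \<bullet> (G s *v y s)) + b s \<bullet> y s + d s) has_real_derivative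
     ((1/2) * (y t \<bullet> (G t *v yd + Gd *v y t) + yd \<bullet> (G t *v y t)) + (b t \<bullet> yd + bd \<bullet> y t) + dd)) (at t within S)"
    using yGy by' d'[folded dd_def] unfolding has_real_derivative_iff_has_vector_derivative[symmetric]
    by (auto intro!: derivative_eq_intros)
  have s1: "y t \<bullet> (G t *v yd) = (G t *v y t) \<bullet> yd"
    by (metis dot_tr sym)
  have "(1/2) * (y t \<bullet> (G t *v yd + Gd *v y t) + yd \<bullet> (G t *v y t)) + (b t \<bullet> yd + bd \<bullet> y t) + dd
     = (G t *v y t) \<bullet> (A *v y t + B *v u) + (1/2) * (y t \<bullet> (Gd *v y t)) + bd \<bullet> y t + b t \<bullet> (A *v y t + B *v u) + dd"
    unfolding inner_add_right s1 by (simp add: yd_def inner_commute algebra_simps)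
  also have "\<dots> = - ((q/2) * (norm (y t - xh))\<^sup>2 + (r/2) * (norm u)\<^sup>2) + (r/2) * (norm (u + (1/r) *\<^sub>R (transpose B *v (G t *v y t + b t))))\<^sup>2"
    by (rule alg[OF sym r Gd_def bd_def dd_def])
  finally show ?thesis using tot by simp
qed


lemma gron:
  fixes f f' :: "real \<Rightarrow> real"
  assumes ab: "a \<le> b" and d: "\<And>t. t \<in> {a..b} \<Longrightarrow> (f has_real_derivative f' t) (at t within {a..b})"
    and K: "\<And>t. t \<in> {a..b} \<Longrightarrow> f' t \<ge> - K * f t"
    and nn: "\<And>t. t \<in> {a..b} \<Longrightarrow> f t \<ge> 0" and fb: "f b = 0" and t: "t \<in> {a..b}"
  shows "f t = 0"
proof -
  define h where "h s = f s * exp (K * s)" for s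
  have cf: "continuous_on {a..b} f"
    using d by (meson DERIV_continuous continuous_on_eq_continuous_within)
  have ch: "continuous_on {t..b} h" unfolding h_def
    using t by (intro continuous_intros continuous_on_subset[OF cf]) auto
  have "h t \<le> h b"
  proof (rule DERIV_nonneg_imp_increasing_open[OF _ _ ch])
    show "t \<le> b" using t by auto
    fix x assume x: "t < x" "x < b"
    then have xin: "x \<in> {a..b}" using t by auto
    have "at x within {a..b} = at x" using x t by (intro at_within_Icc_at) auto
    then have dx: "(f has_real_derivative f' x) (at x)" using d[OF xin] by simp
    have "(h has_real_derivative (f' x * exp (K * x) + f x * (exp (K * x) * K))) (at x)"
      unfolding h_def by (auto intro!: derivative_eq_intros dx)
    moreover have "f' x * exp (K * x) + f x * (exp (K * x) * K) \<ge> 0"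
    proof -
      have "f' x * exp (K * x) + f x * (exp (K * x) * K) = (f' x + K * f x) * exp (K * x)" by (simp add: algebra_simps)
      moreover have "f' x + K * f x \<ge> 0" using K[OF xin] by simp
      ultimately show ?thesis by simp
    qed
    ultimately show "\<exists>y. (h has_real_derivative y) (at x) \<and> 0 \<le> y" by blast
  qed
  then have "f t * exp (K * t) \<le> 0" using fb unfolding h_def by simp
  then have "f t \<le> 0" by (simp add: mult_le_0_iff)
  with nn[OF t] show ?thesis by simp
qed

lemma bb_mm: "bounded_bilinear (\<lambda>(X::real^'n^'n) (Y::real^'n^'n). X ** Y)"
proof -
  have "bilinear (\<lambda>(X::real^'n^'n) (Y::real^'n^'n). X ** Y)"
    unfolding bilinear_def
    by (auto intro!: linearI simp: matrix_eq matrix_vector_mul_assoc[symmetric] matrix_vector_right_distrib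
        matrix_vector_mult_add_rdistrib scaleR_matrix_vector_assoc[symmetric] matrix_vector_mult_scaleR)
  then show ?thesis using bilinear_conv_bounded_bilinear by blast
qed

lemma bl_tr: "bounded_linear (transpose :: real^'n^'m \<Rightarrow> real^'m^'n)"
proof -
  have "linear (transpose :: real^'n^'m \<Rightarrow> real^'m^'n)"
    by (auto intro!: linearI simp: transpose_def vec_eq_iff)
  then show ?thesis using linear_conv_bounded_linear by blast
qed

lemma riccati_sym:
  fixes G :: "real \<Rightarrow> real^'n^'n" and A :: "real^'n^'n" and B :: "real^'m^'n"
  assumes ab: "a \<le> b"
    and G': "\<And>t. t \<in> {a..b} \<Longrightarrow> (G has_vector_derivative ((1/r) *\<^sub>R (G t ** B ** transpose B ** G t)
           - G t ** A - transpose A ** G t - q *\<^sub>R mat 1)) (at t within {a..b})"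
    and Gb: "transpose (G b) = G b" and t: "t \<in> {a..b}"
  shows "transpose (G t) = G t"
proof -
  define C where "C = B ** transpose B"
  define D where "D s = G s - transpose (G s)" for s
  define Dd where "Dd s = (1/r) *\<^sub>R (D s ** C ** G s + transpose (G s) ** C ** D s) - D s ** A - transpose A ** D s" for s
  have trC: "transpose C = C" unfolding C_def by (simp add: matrix_transpose_mul)
  have D': "(D has_vector_derivative Dd s) (at s within {a..b})" if s: "s \<in> {a..b}" for s
  proof -
    let ?Gd = "(1/r) *\<^sub>R (G s ** B ** transpose B ** G s) - G s ** A - transpose A ** G s - q *\<^sub>R mat 1"
    have tr: "((\<lambda>s. transpose (G s)) has_vector_derivative transpose ?Gd) (at s within {a..b})"
      using bounded_linear.has_vector_derivative[OF bl_tr G'[OF s]] .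
    have DD: "(D has_vector_derivative ?Gd - transpose ?Gd) (at s within {a..b})"
      unfolding D_def using G'[OF s] tr by (rule derivative_intros)
    have trd: "transpose (X - Y) = transpose X - transpose Y" for X Y :: "real^'n^'n"
      by (simp add: transpose_def vec_eq_iff)
    have tGd: "transpose ?Gd = (1/r) *\<^sub>R (transpose (G s) ** C ** transpose (G s)) - transpose (G s) ** A - transpose A ** transpose (G s) - q *\<^sub>R mat 1"
      unfolding C_def by (simp add: trd transpose_scalar matrix_transpose_mul matrix_mul_assoc)
    have "?Gd - transpose ?Gd = Dd s"
      unfolding tGd unfolding Dd_def D_def C_def
      by (simp del: transpose_matrix_vector add: matrix_eq matrix_vector_mul_assoc[symmetric]
          matrix_vector_mult_diff_rdistrib matrix_vector_mult_add_rdistrib scaleR_matrix_vector_assoc[symmetric]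
          matrix_vector_mult_diff_distrib matrix_vector_right_distrib algebra_simps)
    with DD show ?thesis by simp
  qed
  \<comment> \<open>bounds\<close>
  obtain Km where Km: "\<And>(X::real^'n^'n) (Y::real^'n^'n). norm (X ** Y) \<le> norm X * norm Y * Km" and Kmn: "Km \<ge> 0"
  proof -
    have "\<exists>K. \<forall>(X::real^'n^'n) (Y::real^'n^'n). norm (X ** Y) \<le> norm X * norm Y * K"
      using bounded_bilinear.bounded[OF bb_mm] by simp
    then obtain K where "\<forall>(X::real^'n^'n) (Y::real^'n^'n). norm (X ** Y) \<le> norm X * norm Y * K" by blast
    then have "\<forall>(X::real^'n^'n) (Y::real^'n^'n). norm (X ** Y) \<le> norm X * norm Y * max K 0"
      by (meson max.cobounded1 mult_left_mono order_trans mult_nonneg_nonneg norm_ge_zero)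
    then show ?thesis using that[of "max K 0"] by auto
  qed
  obtain Kt where Kt: "\<And>X :: real^'n^'n. norm (transpose X) \<le> norm X * Kt" and Ktn: "Kt \<ge> 0"
  proof -
    obtain K where "\<And>X :: real^'n^'n. norm (transpose X) \<le> norm X * K"
      using bounded_linear.bounded[OF bl_tr] by (metis mult.commute)
    then have "\<And>X :: real^'n^'n. norm (transpose X) \<le> norm X * max K 0"
      by (meson max.cobounded1 mult_left_mono order_trans norm_ge_zero)
    then show ?thesis using that[of "max K 0"] by auto
  qed
  have cG: "continuous_on {a..b} G"
    using G' by (meson has_vector_derivative_continuous continuous_on_eq_continuous_within)
  obtain Gm where Gm: "\<And>s. s \<in> {a..b} \<Longrightarrow> norm (G s) \<le> Gm"
    using compact_imp_bounded[OF compact_continuous_image[OF cG compact_Icc]]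
    unfolding bounded_iff by (metis (no_types, lifting) atLeastAtMost_iff image_eqI)
  define K1 where "K1 = \<bar>1/r\<bar> * (Km * Km * norm C * Gm + Km * Km * Kt * Gm * norm C) + Km * norm A + Km * norm (transpose A)"
  have Bd: "norm (Dd s) \<le> K1 * norm (D s)" if s: "s \<in> {a..b}" for s
  proof -
    have Gs: "norm (G s) \<le> Gm" using Gm[OF s] .
    have n1: "norm (D s ** C ** G s) \<le> Km * Km * norm C * Gm * norm (D s)"
    proof -
      have "norm (D s ** C ** G s) \<le> norm (D s ** C) * norm (G s) * Km" by (rule Km)
      also have "\<dots> \<le> (norm (D s) * norm C * Km) * Gm * Km"
        by (intro mult_right_mono mult_mono Km Gs) (auto simp: Kmn)
      finally show ?thesis by (simp add: algebra_simps)
    qed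
    have n2: "norm (transpose (G s) ** C ** D s) \<le> Km * Km * Kt * Gm * norm C * norm (D s)"
    proof -
      have "norm (transpose (G s) ** C ** D s) \<le> norm (transpose (G s) ** C) * norm (D s) * Km" by (rule Km)
      also have "\<dots> \<le> (norm (transpose (G s)) * norm C * Km) * norm (D s) * Km"
        by (intro mult_right_mono Km) (auto simp: Kmn)
      also have "\<dots> \<le> ((Gm * Kt) * norm C * Km) * norm (D s) * Km"
        by (intro mult_right_mono order_trans[OF Kt]) (auto simp: Kmn Ktn Gs)
      finally show ?thesis by (simp add: algebra_simps)
    qed
    have n3: "norm (D s ** A) \<le> Km * norm A * norm (D s)" using Km[of "D s" A] by (simp add: algebra_simps)
    have n4: "norm (transpose A ** D s) \<le> Km * norm (transpose A) * norm (D s)" using Km[of "transpose A" "D s"] by (simp add: algebra_simps)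
    have "norm (Dd s) \<le> \<bar>1/r\<bar> * (norm (D s ** C ** G s) + norm (transpose (G s) ** C ** D s)) + norm (D s ** A) + norm (transpose A ** D s)"
    proof -
      have a1: "norm ((1/r) *\<^sub>R (D s ** C ** G s + transpose (G s) ** C ** D s)) \<le> \<bar>1/r\<bar> * (norm (D s ** C ** G s) + norm (transpose (G s) ** C ** D s))"
        by (simp only: norm_scaleR real_norm_def) (intro mult_left_mono norm_triangle_ineq abs_ge_zero)
      have a2: "norm (Dd s) \<le> norm ((1/r) *\<^sub>R (D s ** C ** G s + transpose (G s) ** C ** D s)) + norm (D s ** A) + norm (transpose A ** D s)"
        unfolding Dd_def by (meson add_right_mono norm_triangle_ineq4 order_trans)
      show ?thesis using a1 a2 by linarith
    qed
    also have "\<dots> \<le> K1 * norm (D s)"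
    proof -
      have "\<bar>1/r\<bar> * (norm (D s ** C ** G s) + norm (transpose (G s) ** C ** D s)) \<le> \<bar>1/r\<bar> * (Km * Km * norm C * Gm * norm (D s) + Km * Km * Kt * Gm * norm C * norm (D s))"
        by (intro mult_left_mono add_mono n1 n2) auto
      moreover have "K1 * norm (D s) = \<bar>1/r\<bar> * (Km * Km * norm C * Gm * norm (D s) + Km * Km * Kt * Gm * norm C * norm (D s)) + Km * norm A * norm (D s) + Km * norm (transpose A) * norm (D s)"
        unfolding K1_def by (simp add: algebra_simps)
      ultimately show ?thesis using n3 n4 by linarith
    qed
    finally show ?thesis .
  qed
  define f where "f s = D s \<bullet> D s" for s
  have fd: "(f has_real_derivative 2 * (D s \<bullet> Dd s)) (at s within {a..b})" if s: "s \<in> {a..b}" for s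
    unfolding f_def has_real_derivative_iff_has_vector_derivative
    using bounded_bilinear.has_vector_derivative[OF bounded_bilinear_inner D'[OF s] D'[OF s]]
    by (simp add: inner_commute)
  have "f t = 0"
  proof (rule gron[OF ab fd, where K = "2 * K1"])
    fix s assume s: "s \<in> {a..b}"
    have "\<bar>D s \<bullet> Dd s\<bar> \<le> norm (D s) * norm (Dd s)" by (rule Cauchy_Schwarz_ineq2)
    also have "\<dots> \<le> norm (D s) * (K1 * norm (D s))" by (intro mult_left_mono Bd[OF s]) auto
    finally have "\<bar>D s \<bullet> Dd s\<bar> \<le> K1 * f s" by (simp add: f_def dot_square_norm power2_eq_square algebra_simps)
    then show "2 * (D s \<bullet> Dd s) \<ge> - (2 * K1) * f s" by linarith
  next
    fix s show "f s \<ge> 0" by (simp add: f_def)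
  next
    show "f b = 0" using Gb by (simp add: f_def D_def)
  qed (use t in auto)
  then show ?thesis by (simp add: f_def D_def)
qed


typedef (overloaded) ('a::finite) endo = "UNIV :: ((real^'a) \<Rightarrow>\<^sub>L (real^'a)) set"
  morphisms Op Endo by simp

setup_lifting type_definition_endo

instantiation endo :: (finite) real_normed_algebra_1
begin
lift_definition zero_endo :: "'a endo" is 0 .
lift_definition one_endo :: "'a endo" is id_blinfun .
lift_definition plus_endo :: "'a endo \<Rightarrow> 'a endo \<Rightarrow> 'a endo" is "(+)" .
lift_definition minus_endo :: "'a endo \<Rightarrow> 'a endo \<Rightarrow> 'a endo" is "(-)" .
lift_definition uminus_endo :: "'a endo \<Rightarrow> 'a endo" is uminus .
lift_definition times_endo :: "'a endo \<Rightarrow> 'a endo \<Rightarrow> 'a endo" is "(o\<^sub>L)" .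
lift_definition scaleR_endo :: "real \<Rightarrow> 'a endo \<Rightarrow> 'a endo" is "(*\<^sub>R)" .
lift_definition norm_endo :: "'a endo \<Rightarrow> real" is norm .
definition dist_endo :: "'a endo \<Rightarrow> 'a endo \<Rightarrow> real" where "dist_endo a b = norm (a - b)"
definition sgn_endo :: "'a endo \<Rightarrow> 'a endo" where "sgn_endo x = scaleR (inverse (norm x)) x"
definition [code del]:
  "(uniformity :: ('a endo \<times> 'a endo) filter) = (INF e\<in>{0 <..}. principal {(x, y). dist x y < e})"
definition open_endo :: "'a endo set \<Rightarrow> bool"
  where [code del]: "open_endo S = (\<forall>x\<in>S. \<forall>\<^sub>F (x', y) in uniformity. x' = x \<longrightarrow> y \<in> S)"
instance
proof
  fix a b c :: "'a endo" and r s :: real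
  show "a + b + c = a + (b + c)" by transfer (simp add: add.assoc)
  show "a + b = b + a" by transfer (simp add: add.commute)
  show "0 + a = a" by transfer simp
  show "- a + a = 0" by transfer simp
  show "a - b = a + - b" by transfer simp
  show "r *\<^sub>R (a + b) = r *\<^sub>R a + r *\<^sub>R b" by transfer (simp add: scaleR_add_right)
  show "(r + s) *\<^sub>R a = r *\<^sub>R a + s *\<^sub>R a" by transfer (simp add: scaleR_add_left)
  show "r *\<^sub>R s *\<^sub>R a = (r * s) *\<^sub>R a" by transfer simp
  show "1 *\<^sub>R a = a" by transfer simp
  show "a * b * c = a * (b * c)" by transfer (auto intro!: blinfun_eqI)
  show "(a + b) * c = a * c + b * c" by transfer (auto intro!: blinfun_eqI simp: blinfun.add_left)
  show "a * (b + c) = a * b + a * c" by transfer (auto intro!: blinfun_eqI simp: blinfun.add_right plus_blinfun.rep_eq)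
  show "1 * a = a" by transfer (auto intro!: blinfun_eqI)
  show "a * 1 = a" by transfer (auto intro!: blinfun_eqI)
  show "(0::'a endo) \<noteq> 1"
  proof transfer
    show "(0::(real^'a) \<Rightarrow>\<^sub>L (real^'a)) \<noteq> id_blinfun"
      by (metis norm_blinfun_id norm_zero zero_neq_one)
  qed
  show "r *\<^sub>R a * b = r *\<^sub>R (a * b)" by transfer (auto intro!: blinfun_eqI simp: blinfun.scaleR_left)
  show "a * r *\<^sub>R b = r *\<^sub>R (a * b)" by transfer (auto intro!: blinfun_eqI simp: blinfun.scaleR_right scaleR_blinfun.rep_eq)
  show "norm (a * b) \<le> norm a * norm b" by transfer (rule norm_blinfun_compose)
  show "norm (1::'a endo) = 1" by transfer simp
  show "dist a b = norm (a - b)" by (simp add: dist_endo_def)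
  show "sgn a = inverse (norm a) *\<^sub>R a" by (simp add: sgn_endo_def)
  show "(uniformity :: ('a endo \<times> 'a endo) filter) = (INF e\<in>{0 <..}. principal {(x, y). dist x y < e})"
    by (simp add: uniformity_endo_def)
  fix U :: "'a endo set"
  show "open U = (\<forall>x\<in>U. \<forall>\<^sub>F (x', y) in uniformity. x' = x \<longrightarrow> y \<in> U)"
    by (simp add: open_endo_def)
  show "(norm a = 0) = (a = 0)" by transfer simp
  show "norm (a + b) \<le> norm a + norm b" by transfer (rule norm_triangle_ineq)
  show "norm (r *\<^sub>R a) = \<bar>r\<bar> * norm a" by transfer simp
qed
end

lemma dist_Op: "dist (Op a) (Op b) = dist a b"
  by (simp add: dist_norm dist_endo_def norm_endo.rep_eq minus_endo.rep_eq)

instance endo :: (finite) banach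
proof
  fix X :: "nat \<Rightarrow> 'a endo"
  assume "Cauchy X"
  then have "Cauchy (\<lambda>n. Op (X n))" unfolding Cauchy_def by (simp add: dist_Op)
  then obtain L where L: "(\<lambda>n. Op (X n)) \<longlonglongrightarrow> L" using convergent_def Cauchy_convergent_iff by blast
  have "X \<longlonglongrightarrow> Endo L"
    unfolding lim_sequentially
  proof (intro allI impI)
    fix e :: real assume "e > 0"
    then obtain N where "\<forall>n\<ge>N. dist (Op (X n)) L < e" using L unfolding lim_sequentially by blast
    then show "\<exists>N. \<forall>n\<ge>N. dist (X n) (Endo L) < e"
      by (metis dist_Op Endo_inverse UNIV_I)
  qed
  then show "convergent X" unfolding convergent_def by blast
qed

lemma Op_times: "Op (a * b) v = Op a (Op b v)" by transfer simp
lemma Op_one: "Op 1 v = v" by transfer simp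
lemma Op_minus: "Op (- a) v = - Op a v" by transfer (simp add: uminus_blinfun.rep_eq)
lemma Op_scaleR: "Op (r *\<^sub>R a) v = r *\<^sub>R Op a v" by transfer (simp add: scaleR_blinfun.rep_eq)
lemma Op_plus: "Op (a + b) v = Op a v + Op b v" by transfer (simp add: plus_blinfun.rep_eq)
lemma norm_Op: "norm (Op a) = norm a" by transfer simp
lemma bl_Op_at: "bounded_linear (\<lambda>a. Op a v)"
proof (rule bounded_linear_intro[where K="norm v"])
  fix a b :: "'a endo" and r :: real
  show "Op (a + b) v = Op a v + Op b v" by (rule Op_plus)
  show "Op (r *\<^sub>R a) v = r *\<^sub>R Op a v" by (rule Op_scaleR)
  show "norm (Op a v) \<le> norm a * norm v" using norm_blinfun[of "Op a" v] by (simp add: norm_Op)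
qed


lemma bl_Op: "bounded_linear (Op :: 'n::finite endo \<Rightarrow> _)"
proof (rule bounded_linear_intro[where K=1])
  fix a b :: "'n endo" and r :: real
  show "Op (a + b) = Op a + Op b" by (simp add: plus_endo.rep_eq)
  show "Op (r *\<^sub>R a) = r *\<^sub>R Op a" by (simp add: scaleR_endo.rep_eq)
  show "norm (Op a) \<le> norm a * 1" by (simp add: norm_Op)
qed

lemma bb_Op: "bounded_bilinear (\<lambda>(X::'n::finite endo) v. Op X v)"
  using bounded_bilinear.comp1[OF bounded_bilinear_blinfun_apply bl_Op] by simp

lemma bl_mv: "bounded_linear (\<lambda>v. (M::real^'a^'b) *v v)"
  using linear_conv_bounded_linear matrix_vector_mul_linear by blast

lemma Op_expand: "v \<bullet> Op X w = w \<bullet> (\<chi> i. v \<bullet> Op X (axis i 1))"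
proof -
  have "w = (\<Sum>i\<in>UNIV. (w$i) *\<^sub>R axis i 1)"
    using basis_expansion[of w] by (simp add: scalar_mult_eq_scaleR)
  then have "Op X w = (\<Sum>i\<in>UNIV. (w$i) *\<^sub>R Op X (axis i 1))"
    by (metis (no_types, lifting) blinfun.scaleR_right blinfun.sum_right sum.cong)
  then have "v \<bullet> Op X w = (\<Sum>i\<in>UNIV. (w$i) * (v \<bullet> Op X (axis i 1)))"
    by (simp add: inner_sum_right)
  also have "\<dots> = w \<bullet> (\<chi> i. v \<bullet> Op X (axis i 1))"
    by (simp add: inner_vec_def)
  finally show ?thesis .
qed

lemma steer:
  fixes A :: "real^'n^'n" and B :: "real^'m^'n" and x0 p :: "real^'n"
  assumes ctrl: "controllable A B" and T: "T > 0"
  shows "\<exists>y u. continuous_on {0..T} u \<and> y 0 = x0 \<and> y T = p \<and>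
     (\<forall>t\<in>{0..T}. (y has_vector_derivative (A *v y t + B *v u t)) (at t within {0..T}))"
proof -
  define Ab :: "'n endo" where "Ab = Endo (Blinfun (\<lambda>v. A *v v))"
  have OpAb: "Op Ab v = A *v v" for v
    unfolding Ab_def by (simp add: Endo_inverse bounded_linear_Blinfun_apply bl_mv)
  define E where "E t = exp (t *\<^sub>R Ab)" for t
  define F where "F t = exp (t *\<^sub>R (- Ab))" for t
  have EF: "E t * F t = 1" for t
    unfolding E_def F_def by (metis exp_minus_inverse scaleR_minus_right)
  have E0: "E 0 = 1" and F0: "F 0 = 1" unfolding E_def F_def by simp_all
  have dE: "(E has_vector_derivative Ab * E t) (at t)" for t
    unfolding E_def by (rule exp_scaleR_has_vector_derivative_left)
  have dF: "(F has_vector_derivative F t * (- Ab)) (at t)" for t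
    unfolding F_def by (rule exp_scaleR_has_vector_derivative_right)
  have dFw: "((\<lambda>s. Op (F s) w) has_vector_derivative - Op (F t) (A *v w)) (at t)" for t w
    using bounded_linear.has_vector_derivative[OF bl_Op_at dF[of t], of w]
    by (simp add: Op_times Op_minus OpAb blinfun.minus_right)
  have cF: "continuous_on S F" for S
    using dF by (meson continuous_at_imp_continuous_on has_vector_derivative_continuous)
  have cOpF: "continuous_on S (\<lambda>s. Op (F s))" for S
    using continuous_on_compose[OF cF linear_continuous_on[OF bl_Op]] by (simp add: o_def)
  have cFw: "continuous_on S (\<lambda>s. Op (F s) w)" for S w
    using dFw by (meson continuous_at_imp_continuous_on has_vector_derivative_continuous)
  define c where "c y s = (\<chi> i. y \<bullet> Op (F s) (axis i 1))" for y s
  define uu where "uu y s = transpose B *v c y s" for y s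
  define g where "g y s = Op (F s) (B *v uu y s)" for y s
  define W where "W y = integral {0..T} (g y)" for y
  have cc: "continuous_on S (c y)" for S y
    unfolding c_def by (intro continuous_on_vec_lambda continuous_intros cFw)
  have cu: "continuous_on S (uu y)" for S y
    unfolding uu_def using continuous_on_compose[OF cc linear_continuous_on[OF bl_mv[of "transpose B"]]] by (simp add: o_def del: transpose_matrix_vector)
  have cg: "continuous_on S (g y)" for S y
    unfolding g_def
    by (rule bounded_bilinear.continuous_on[OF bounded_bilinear_blinfun_apply cOpF])
       (use continuous_on_compose[OF cu linear_continuous_on[OF bl_mv]] in \<open>simp add: o_def\<close>)
  have ig: "g y integrable_on {0..T}" for y by (rule integrable_continuous_interval[OF cg])
  have cadd: "c (y1 + y2) s = c y1 s + c y2 s" for y1 y2 s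
    unfolding c_def by (simp add: vec_eq_iff inner_add_left)
  have cscale: "c (r *\<^sub>R y) s = r *\<^sub>R c y s" for r y s
    unfolding c_def by (simp add: vec_eq_iff)
  have gadd: "g (y1 + y2) s = g y1 s + g y2 s" for y1 y2 s
    unfolding g_def uu_def cadd
    by (simp add: matrix_vector_right_distrib blinfun.add_right del: transpose_matrix_vector)
  have gscale: "g (r *\<^sub>R y) s = r *\<^sub>R g y s" for r y s
    unfolding g_def uu_def cscale
    by (simp add: matrix_vector_mult_scaleR blinfun.scaleR_right del: transpose_matrix_vector)
  have linW: "linear W"
  proof (rule linearI)
    fix y1 y2 show "W (y1 + y2) = W y1 + W y2"
      unfolding W_def gadd by (rule integral_add[OF ig ig])
  next
    fix r y show "W (r *\<^sub>R y) = r *\<^sub>R W y"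
      unfolding W_def gscale by simp
  qed
  have surj: "range W = UNIV"
  proof (rule ccontr)
    assume ne: "range W \<noteq> UNIV"
    have sub: "subspace (range W)" using linear_subspace_image[OF linW subspace_UNIV] .
    then have spanW: "span (range W) = range W" by (simp add: span_eq_iff)
    have dimlt: "dim (range W) < DIM(real^'n)"
      using dim_subset_UNIV[of "range W"] dim_eq_full[of "range W"] ne spanW
      by (metis le_neq_implies_less)
    then obtain v :: "real^'n" where v0: "v \<noteq> 0" and orth: "\<And>y. y \<in> span (range W) \<Longrightarrow> orthogonal v y"
      using orthogonal_to_subspace_exists[OF dimlt] by blast
    have "v \<bullet> W v = 0" using orth[of "W v"] spanW by (simp add: orthogonal_def)
    moreover have "v \<bullet> W v = integral {0..T} (\<lambda>s. (norm (uu v s))\<^sup>2)"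
    proof -
      have "v \<bullet> W v = integral {0..T} (\<lambda>s. v \<bullet> g v s)"
      proof -
        have "integral {0..T} ((\<lambda>x. v \<bullet> x) \<circ> g v) = v \<bullet> integral {0..T} (g v)"
          by (rule integral_linear[OF ig[of v] bounded_linear_inner_right[of v]])
        then show ?thesis unfolding W_def comp_def by (rule sym)
      qed
      moreover have "v \<bullet> g v s = (norm (uu v s))\<^sup>2" for s
      proof -
        have "v \<bullet> g v s = (B *v uu v s) \<bullet> c v s" unfolding g_def c_def by (rule Op_expand)
        also have "\<dots> = c v s \<bullet> (B *v uu v s)" by (rule inner_commute)
        also have "\<dots> = (transpose B *v c v s) \<bullet> uu v s" by (rule dot_tr)
        also have "\<dots> = (norm (uu v s))\<^sup>2" unfolding uu_def[symmetric] by (simp add: power2_norm_eq_inner)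
        finally show ?thesis .
      qed
      ultimately show ?thesis by simp
    qed
    ultimately have "integral {0..T} (\<lambda>s. (norm (uu v s))\<^sup>2) = 0" by simp
    then have z: "\<forall>s\<in>{0..T}. (norm (uu v s))\<^sup>2 = 0"
      using integral_eq_0_iff[of 0 T "\<lambda>s. (norm (uu v s))\<^sup>2"] T
      by (simp add: continuous_intros cu)
    have z2: "v \<bullet> Op (F s) (B *v w) = 0" if s: "s \<in> {0..T}" for s w
    proof -
      have "uu v s = 0" using z s by simp
      have "v \<bullet> Op (F s) (B *v w) = (B *v w) \<bullet> c v s" unfolding c_def by (rule Op_expand)
      also have "\<dots> = c v s \<bullet> (B *v w)" by (rule inner_commute)
      also have "\<dots> = (transpose B *v c v s) \<bullet> w" by (rule dot_tr)
      also have "\<dots> = w \<bullet> uu v s" unfolding uu_def[symmetric] by (rule inner_commute)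
      also have "\<dots> = 0" using \<open>uu v s = 0\<close> by simp
      finally show ?thesis .
    qed
    define h where "h w k s = v \<bullet> Op (F s) ((((*v) A) ^^ k) (B *v w))" for w k s
    have dh: "(h w k has_real_derivative - h w (Suc k) s) (at s)" for w k s
    proof -
      have "((\<lambda>s. v \<bullet> Op (F s) ((((*v) A) ^^ k) (B *v w))) has_vector_derivative v \<bullet> (- Op (F s) (A *v ((((*v) A) ^^ k) (B *v w))))) (at s)"
        by (rule bounded_linear.has_vector_derivative[OF bounded_linear_inner_right dFw])
      then show ?thesis unfolding h_def has_real_derivative_iff_has_vector_derivative by simp
    qed
    have ch: "continuous_on UNIV (h w k)" for w k
      using dh by (meson DERIV_continuous continuous_at_imp_continuous_on)
    have hz: "\<forall>s\<in>{0<..<T}. h w k s = 0" for w k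
    proof (induction k)
      case 0 then show ?case using z2 by (simp add: h_def)
    next
      case (Suc k)
      show ?case
      proof
        fix s assume s: "s \<in> {0<..<T}"
        have "((\<lambda>_. 0) has_real_derivative 0) (at s)" by simp
        then have "(h w k has_real_derivative 0) (at s)"
          by (rule has_field_derivative_transform_within_open[where S="{0<..<T}"]) (use s Suc in auto)
        with dh[of w k s] have "- h w (Suc k) s = 0" by (rule DERIV_unique)
        then show "h w (Suc k) s = 0" by simp
      qed
    qed
    have h0: "h w k 0 = 0" for w k
    proof -
      have cl: "closed {s. h w k s = 0}"
        using closed_Collect_eq[OF ch continuous_on_const] by simp
      have "{0<..<T} \<subseteq> {s. h w k s = 0}" using hz by auto
      then have "closure {0<..<T} \<subseteq> {s. h w k s = 0}" using cl by (rule closure_minimal)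
      then show ?thesis using T by (auto simp: subset_eq)
    qed
    have ox: "orthogonal v x" if xin: "x \<in> (\<Union>k<CARD('n). range (\<lambda>w. (((*v) A) ^^ k) (B *v w)))" for x
    proof -
      from xin obtain k where "x \<in> range (\<lambda>w. (((*v) A) ^^ k) (B *v w))" by (rule UN_E)
      then obtain w where xe: "x = (((*v) A) ^^ k) (B *v w)" by (rule rangeE)
      have "h w k 0 = 0" by (rule h0)
      then have "v \<bullet> x = 0" unfolding h_def F0 Op_one xe .
      then show ?thesis unfolding orthogonal_def .
    qed
    have gen: "span (\<Union>k<CARD('n). range (\<lambda>w. (((*v) A) ^^ k) (B *v w))) = UNIV"
      using ctrl unfolding controllable_def .
    have vin: "v \<in> span (\<Union>k<CARD('n). range (\<lambda>w. (((*v) A) ^^ k) (B *v w)))"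
      unfolding gen by (rule UNIV_I)
    have "orthogonal v v" by (rule orthogonal_to_span[OF vin ox])
    then show False using v0 by (simp add: orthogonal_def)
  qed
  have "Op (F T) p - x0 \<in> range W" using surj by simp
  then obtain y0 where y0': "Op (F T) p - x0 = W y0" by (rule rangeE)
  have y0: "W y0 = Op (F T) p - x0" using y0' by simp
  define z where "z t = integral {0..t} (g y0)" for t
  define x where "x t = Op (E t) (x0 + z t)" for t
  have x0': "x 0 = x0" unfolding x_def z_def by (simp add: E0 Op_one)
  have xT: "x T = p"
    unfolding x_def z_def W_def[symmetric] y0 by (simp add: Op_times[symmetric] EF Op_one)
  have dx: "(x has_vector_derivative (A *v x t + B *v uu y0 t)) (at t within {0..T})" if t: "t \<in> {0..T}" for t
  proof -
    have dz: "((\<lambda>s. x0 + z s) has_vector_derivative g y0 t) (at t within {0..T})"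
      unfolding z_def using integral_has_vector_derivative[OF cg t]
      by (auto intro!: derivative_eq_intros)
    have "(x has_vector_derivative (Op (E t) (g y0 t) + Op (Ab * E t) (x0 + z t))) (at t within {0..T})"
      unfolding x_def
      using bounded_bilinear.has_vector_derivative[OF bb_Op has_vector_derivative_at_within[OF dE] dz] by simp
    moreover have "Op (E t) (g y0 t) + Op (Ab * E t) (x0 + z t) = A *v x t + B *v uu y0 t"
      unfolding g_def x_def by (simp add: Op_times[symmetric] EF Op_one) (simp add: Op_times OpAb)
    ultimately show ?thesis by simp
  qed
  show ?thesis
  proof (intro exI[of _ x] exI[of _ "uu y0"] conjI ballI)
    show "continuous_on {0..T} (uu y0)" by (rule cu)
    show "x 0 = x0" by (rule x0')
    show "x T = p" by (rule xT)
    fix t assume "t \<in> {0..T}"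
    then show "(x has_vector_derivative A *v x t + B *v uu y0 t) (at t within {0..T})" by (rule dx)
  qed
qed



lemma traj_value:
  fixes A :: "real^'n^'n" and B :: "real^'m^'n" and G :: "real \<Rightarrow> real^'n^'n"
    and b y xh :: "real \<Rightarrow> real^'n" and d :: "real \<Rightarrow> real" and u :: "real \<Rightarrow> real^'m"
    and V :: "real \<Rightarrow> real"
  assumes T: "0 \<le> T" and r: "r > 0" and q: "q \<ge> 0"
  and V: "\<And>s. V s = (1/2) * (y s \<bullet> (G s *v y s)) + b s \<bullet> y s + d s"
  and sym: "\<And>t. t \<in> {0..T} \<Longrightarrow> transpose (G t) = G t"
  and G': "\<And>t. t \<in> {0..T} \<Longrightarrow> (G has_vector_derivative ((1/r) *\<^sub>R (G t ** B ** transpose B ** G t) - G t ** A - transpose A ** G t - q *\<^sub>R mat 1)) (at t within {0..T})"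
  and b': "\<And>t. t \<in> {0..T} \<Longrightarrow> (b has_vector_derivative (((1/r) *\<^sub>R (G t ** B ** transpose B) - transpose A) *v b t + q *\<^sub>R xh t)) (at t within {0..T})"
  and d': "\<And>t. t \<in> {0..T} \<Longrightarrow> (d has_real_derivative ((1 / (2*r)) * (b t \<bullet> ((B ** transpose B) *v b t)) - (q/2) * (xh t \<bullet> xh t))) (at t within {0..T})"
  and y': "\<And>t. t \<in> {0..T} \<Longrightarrow> (y has_vector_derivative (A *v y t + B *v u t)) (at t within {0..T})"
  and cu: "continuous_on {0..T} u" and cxh: "continuous_on {0..T} xh"
  shows "(\<And>t. t \<in> {0..T} \<Longrightarrow> u t = - ((1/r) *\<^sub>R (transpose B *v (G t *v y t + b t)))) \<Longrightarrow> V T \<le> V 0"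
    and "V 0 \<le> V T + integral {0..T} (\<lambda>t. (q/2) * (norm (y t - xh t))\<^sup>2 + (r/2) * (norm (u t))\<^sup>2)"
proof -
  define L where "L t = (q/2) * (norm (y t - xh t))\<^sup>2 + (r/2) * (norm (u t))\<^sup>2" for t
  define R where "R t = (r/2) * (norm (u t + (1/r) *\<^sub>R (transpose B *v (G t *v y t + b t))))\<^sup>2" for t
  have Vf: "V = (\<lambda>s. (1/2) * (y s \<bullet> (G s *v y s)) + b s \<bullet> y s + d s)" using V by auto
  have df: "(V has_real_derivative (- L t + R t)) (at t within {0..T})" if t: "t \<in> {0..T}" for t
    unfolding Vf L_def R_def
    using value_deriv[OF sym[OF t] _ G'[OF t] b'[OF t] d'[OF t] y'[OF t]] r by simp
  have ftc: "((\<lambda>t. - L t + R t) has_integral (V T - V 0)) {0..T}"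
    using fundamental_theorem_of_calculus[OF T, of V "\<lambda>t. - L t + R t"] df
    by (simp add: has_real_derivative_iff_has_vector_derivative)
  have cy: "continuous_on {0..T} y"
    using y' by (meson has_vector_derivative_continuous continuous_on_eq_continuous_within)
  have cL: "continuous_on {0..T} L" unfolding L_def
    by (intro continuous_intros cy cxh cu)
  show "V T \<le> V 0" if opt: "\<And>t. t \<in> {0..T} \<Longrightarrow> u t = - ((1/r) *\<^sub>R (transpose B *v (G t *v y t + b t)))"
  proof -
    have "V T - V 0 \<le> 0"
    proof (rule has_integral_le[OF ftc has_integral_0])
      fix t assume t: "t \<in> {0..T}"
      have "R t = 0" using opt[OF t] unfolding R_def by simp
      moreover have "L t \<ge> 0" unfolding L_def using q r by simp
      ultimately show "- L t + R t \<le> 0" by simp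
    qed
    then show ?thesis by simp
  qed
  have iL: "((\<lambda>t. - L t) has_integral - integral {0..T} L) {0..T}"
    using has_integral_neg[OF integrable_integral[OF integrable_continuous_interval[OF cL]]] by simp
  have "- integral {0..T} L \<le> V T - V 0"
  proof (rule has_integral_le[OF iL ftc])
    fix t assume "t \<in> {0..T}"
    show "- L t \<le> - L t + R t" unfolding R_def using r by simp
  qed
  then show "V 0 \<le> V T + integral {0..T} (\<lambda>t. (q/2) * (norm (y t - xh t))\<^sup>2 + (r/2) * (norm (u t))\<^sup>2)"
    unfolding L_def[abs_def] by simp
qed

theorem lemma2:
  fixes A :: "real^'n^'n" and B :: "real^'m^'n"
    and q r T :: real and l N :: nat
    and p :: "nat \<Rightarrow> real^'n"
    and x0 :: "nat \<Rightarrow> real^'n"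
    and xhat :: "real \<Rightarrow> real \<Rightarrow> real^'n"
    and \<Gamma> :: "real \<Rightarrow> real \<Rightarrow> real^'n^'n"
    and \<beta> :: "real \<Rightarrow> nat \<Rightarrow> real \<Rightarrow> real^'n"
    and \<delta> :: "real \<Rightarrow> nat \<Rightarrow> real \<Rightarrow> real"
    and x :: "real \<Rightarrow> nat \<Rightarrow> real \<Rightarrow> real^'n"
  assumes ctrl: "controllable A B"
    and q: "q > 0" and r: "r > 0" and T: "T > 0" and l: "l \<ge> 1"
    and xhat_cont: "\<And>M. M > 0 \<Longrightarrow> continuous_on {0..T} (xhat M)"
    and xhat_bdd: "\<exists>C. \<forall>M>0. sqrt (integral {0..T} (\<lambda>t. (norm (xhat M t))\<^sup>2)) \<le> C"
    and Gamma_ode: "\<And>M t. M > 0 \<Longrightarrow> t \<in> {0..T} \<Longrightarrow>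
       ((\<Gamma> M) has_vector_derivative
          ((1/r) *\<^sub>R (\<Gamma> M t ** B ** transpose B ** \<Gamma> M t)
           - \<Gamma> M t ** A - transpose A ** \<Gamma> M t - q *\<^sub>R mat 1)) (at t within {0..T})"
    and Gamma_T: "\<And>M. M > 0 \<Longrightarrow> \<Gamma> M T = M *\<^sub>R mat 1"
    and beta_ode: "\<And>M k t. M > 0 \<Longrightarrow> k \<in> {1..l} \<Longrightarrow> t \<in> {0..T} \<Longrightarrow>
       ((\<beta> M k) has_vector_derivative
          (((1/r) *\<^sub>R (\<Gamma> M t ** B ** transpose B) - transpose A) *v \<beta> M k t
           + q *\<^sub>R xhat M t)) (at t within {0..T})"
    and beta_T: "\<And>M k. M > 0 \<Longrightarrow> k \<in> {1..l} \<Longrightarrow> \<beta> M k T = - (M *\<^sub>R p k)"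
    and delta_ode: "\<And>M k t. M > 0 \<Longrightarrow> k \<in> {1..l} \<Longrightarrow> t \<in> {0..T} \<Longrightarrow>
       ((\<delta> M k) has_real_derivative
          ((1 / (2*r)) * (\<beta> M k t \<bullet> ((B ** transpose B) *v \<beta> M k t))
           - (q/2) * (xhat M t \<bullet> xhat M t))) (at t within {0..T})"
    and delta_T: "\<And>M k. M > 0 \<Longrightarrow> k \<in> {1..l} \<Longrightarrow> \<delta> M k T = (M/2) * (p k \<bullet> p k)"
    and x_init: "\<And>M i. M > 0 \<Longrightarrow> i \<in> {1..N} \<Longrightarrow> x M i 0 = x0 i"
    and x_ode: "\<And>M i t. M > 0 \<Longrightarrow> i \<in> {1..N} \<Longrightarrow> t \<in> {0..T} \<Longrightarrow>
       ((x M i) has_vector_derivative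
          (A *v x M i t + B *v (- ((1/r) *\<^sub>R (transpose B *v
             (\<Gamma> M t *v x M i t
              + \<beta> M (basin_index l (\<lambda>k. \<beta> M k 0) (\<lambda>k. \<delta> M k 0) (x0 i)) t))))))
         (at t within {0..T})"
  shows "\<forall>\<epsilon>>0. \<exists>M0>0. \<forall>M>M0. \<forall>i\<in>{1..N}. \<exists>j\<in>{1..l}. x M i T \<in> ball (p j) \<epsilon>"
  proof (intro allI impI)
  fix \<epsilon> :: real assume eps: "\<epsilon> > 0"
  obtain C where C: "\<forall>M>0. sqrt (integral {0..T} (\<lambda>t. (norm (xhat M t))\<^sup>2)) \<le> C" using xhat_bdd by blast
  have cxh: "continuous_on {0..T} (xhat M)" if "M > 0" for M using xhat_cont[OF that] .
  have intx: "integral {0..T} (\<lambda>t. (norm (xhat M t))\<^sup>2) \<le> C\<^sup>2" if M: "M > 0" for M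
  proof -
    let ?I = "integral {0..T} (\<lambda>t. (norm (xhat M t))\<^sup>2)"
    have "?I \<ge> 0"
      by (rule integral_nonneg) (auto intro!: integrable_continuous_interval continuous_intros cxh[OF M])
    moreover have "sqrt ?I \<le> C" using C M by blast
    ultimately have "(sqrt ?I)\<^sup>2 \<le> C\<^sup>2" by (intro power_mono) auto
    then show ?thesis using \<open>?I \<ge> 0\<close> by simp
  qed
  have "\<forall>i. \<exists>y u. continuous_on {0..T} u \<and> y 0 = x0 i \<and> y T = p 1 \<and>
     (\<forall>t\<in>{0..T}. (y has_vector_derivative (A *v y t + B *v u t)) (at t within {0..T}))"
    using steer[OF ctrl T] by blast
  then obtain Y U where YU: "\<And>i. continuous_on {0..T} (U i) \<and> Y i 0 = x0 i \<and> Y i T = p 1 \<and>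
     (\<forall>t\<in>{0..T}. (Y i has_vector_derivative (A *v Y i t + B *v U i t)) (at t within {0..T}))"
    by metis
  have cY: "continuous_on {0..T} (Y i)" for i
    using YU[of i] by (meson has_vector_derivative_continuous continuous_on_eq_continuous_within)
  define K where "K i = integral {0..T} (\<lambda>t. q * (norm (Y i t))\<^sup>2 + (r/2) * (norm (U i t))\<^sup>2) + q * C\<^sup>2" for i
  define Ks where "Ks = (\<Sum>i\<in>{1..N}. \<bar>K i\<bar>)"
  have KKs: "K i \<le> Ks" if "i \<in> {1..N}" for i
  proof -
    have "\<bar>K i\<bar> \<le> Ks" unfolding Ks_def by (rule member_le_sum) (use that in auto)
    then show ?thesis by simp
  qed
  have Ks0: "Ks \<ge> 0" unfolding Ks_def by (simp add: sum_nonneg)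
  \<comment> \<open>main estimate\<close>
  have claim: "\<exists>j\<in>{1..l}. (M/2) * (norm (x M i T - p j))\<^sup>2 \<le> K i" if M: "M > 0" and i: "i \<in> {1..N}" for M i
  proof -
    have sym: "transpose (\<Gamma> M t) = \<Gamma> M t" if t: "t \<in> {0..T}" for t
      by (rule riccati_sym[of 0 T "\<Gamma> M" r B A q t]) (use T Gamma_ode[OF M] Gamma_T[OF M] t in \<open>auto simp: transpose_scalar\<close>)
    define V where "V k s z = (1/2) * (z \<bullet> (\<Gamma> M s *v z)) + \<beta> M k s \<bullet> z + \<delta> M k s" for k s z
    have VT: "V k T z = (M/2) * (norm (z - p k))\<^sup>2" if k: "k \<in> {1..l}" for k z
      unfolding V_def Gamma_T[OF M] beta_T[OF M k] delta_T[OF M k]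
      by (simp add: power2_norm_eq_inner inner_diff_left inner_diff_right inner_commute
          scaleR_matrix_vector_assoc[symmetric] algebra_simps)
    define \<phi> where "\<phi> k = \<beta> M k 0 \<bullet> x0 i + \<delta> M k 0" for k
    obtain k0 where k0: "k0 \<in> {1..l}" "\<And>k. k \<in> {1..l} \<Longrightarrow> \<phi> k0 \<le> \<phi> k"
    proof -
      have fin: "finite (\<phi> ` {1..l})" and ne: "\<phi> ` {1..l} \<noteq> {}" using l by auto
      obtain k0 where "k0 \<in> {1..l}" "\<phi> k0 = Min (\<phi> ` {1..l})" using Min_in[OF fin ne] by auto
      then show ?thesis using that Min_le[OF fin] by (metis imageI)
    qed
    have inb: "x0 i \<in> basin l (\<lambda>k. \<beta> M k 0) (\<lambda>k. \<delta> M k 0) k0"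
      unfolding basin_def using k0 by (auto simp: \<phi>_def inner_diff_left algebra_simps)
    define j where "j = basin_index l (\<lambda>k. \<beta> M k 0) (\<lambda>k. \<delta> M k 0) (x0 i)"
    have j: "j \<in> {1..l} \<and> x0 i \<in> basin l (\<lambda>k. \<beta> M k 0) (\<lambda>k. \<delta> M k 0) j"
      unfolding j_def basin_index_def by (rule LeastI[of _ k0]) (use k0 inb in auto)
    have l1: "1 \<in> {1..l}" using l by simp
    have jle: "V j 0 (x0 i) \<le> V 1 0 (x0 i)"
    proof -
      have "(\<beta> M j 0 - \<beta> M 1 0) \<bullet> x0 i \<le> \<delta> M 1 0 - \<delta> M j 0"
        using j l1 unfolding basin_def by blast
      then show ?thesis unfolding V_def by (simp add: inner_diff_left)
    qed
    \<comment> \<open>optimal trajectory\<close>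
    define uo where "uo t = - ((1/r) *\<^sub>R (transpose B *v (\<Gamma> M t *v x M i t + \<beta> M j t)))" for t
    have cG: "continuous_on {0..T} (\<Gamma> M)"
      using Gamma_ode[OF M] by (meson has_vector_derivative_continuous continuous_on_eq_continuous_within)
    have cb: "continuous_on {0..T} (\<beta> M k)" if "k \<in> {1..l}" for k
      using beta_ode[OF M that] by (meson has_vector_derivative_continuous continuous_on_eq_continuous_within)
    have cx: "continuous_on {0..T} (x M i)"
      using x_ode[OF M i] by (meson has_vector_derivative_continuous continuous_on_eq_continuous_within)
    have cuo: "continuous_on {0..T} uo"
      unfolding uo_def
      using continuous_on_compose[OF bounded_bilinear.continuous_on[OF bb_mv cG cx] linear_continuous_on[OF bl_mv[of "transpose B"]]]
      by (intro continuous_intros bounded_bilinear.continuous_on[OF bb_mv] continuous_on_const cG cx cb j[THEN conjunct1])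
    have opt: "V j T (x M i T) \<le> V j 0 (x M i 0)"
      by (rule traj_value(1)[of T r q "\<lambda>s. V j s (x M i s)" "x M i" "\<Gamma> M" "\<beta> M j" "\<delta> M j" B A "xhat M" uo])
        (use T r q sym Gamma_ode[OF M] beta_ode[OF M j[THEN conjunct1]] delta_ode[OF M j[THEN conjunct1]]
          x_ode[OF M i] cuo cxh[OF M] in \<open>auto simp: V_def uo_def j_def\<close>)
    \<comment> \<open>steering trajectory\<close>
    have st: "V 1 0 (Y i 0) \<le> V 1 T (Y i T) + integral {0..T} (\<lambda>t. (q/2) * (norm (Y i t - xhat M t))\<^sup>2 + (r/2) * (norm (U i t))\<^sup>2)"
      by (rule traj_value(2)[of T r q "\<lambda>s. V 1 s (Y i s)" "Y i" "\<Gamma> M" "\<beta> M 1" "\<delta> M 1" B A "xhat M" "U i"])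
        (use T r q sym Gamma_ode[OF M] beta_ode[OF M l1] delta_ode[OF M l1] YU[of i] cxh[OF M] in \<open>auto simp: V_def\<close>)
    have ibound: "integral {0..T} (\<lambda>t. (q/2) * (norm (Y i t - xhat M t))\<^sup>2 + (r/2) * (norm (U i t))\<^sup>2) \<le> K i"
    proof -
      let ?f = "\<lambda>t. (q/2) * (norm (Y i t - xhat M t))\<^sup>2 + (r/2) * (norm (U i t))\<^sup>2"
      let ?g = "\<lambda>t. q * (norm (Y i t))\<^sup>2 + (r/2) * (norm (U i t))\<^sup>2"
      let ?h = "\<lambda>t. (norm (xhat M t))\<^sup>2"
      have ig: "?g integrable_on {0..T}" and ih: "?h integrable_on {0..T}" and iF: "?f integrable_on {0..T}"
        by (auto intro!: integrable_continuous_interval continuous_intros cY YU[THEN conjunct1] cxh[OF M])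
      have pw: "?f t \<le> ?g t + q * ?h t" for t
      proof -
        have "norm (Y i t - xhat M t) \<le> norm (Y i t) + norm (xhat M t)" by (rule norm_triangle_ineq4)
        then have "(norm (Y i t - xhat M t))\<^sup>2 \<le> (norm (Y i t) + norm (xhat M t))\<^sup>2" by (intro power_mono) auto
        also have "\<dots> \<le> 2 * (norm (Y i t))\<^sup>2 + 2 * (norm (xhat M t))\<^sup>2"
        proof -
          have e: "(norm (Y i t) + norm (xhat M t))\<^sup>2 + (norm (Y i t) - norm (xhat M t))\<^sup>2 = 2 * (norm (Y i t))\<^sup>2 + 2 * (norm (xhat M t))\<^sup>2"
            by (simp add: power2_eq_square algebra_simps)
          have "(norm (Y i t) - norm (xhat M t))\<^sup>2 \<ge> 0" by simp
          then show ?thesis using e by linarith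
        qed
        finally have "(q/2) * (norm (Y i t - xhat M t))\<^sup>2 \<le> (q/2) * (2 * (norm (Y i t))\<^sup>2 + 2 * (norm (xhat M t))\<^sup>2)"
          using q by (intro mult_left_mono) auto
        then show ?thesis by (simp add: algebra_simps)
      qed
      have "integral {0..T} ?f \<le> integral {0..T} (\<lambda>t. ?g t + q * ?h t)"
      proof (rule integral_le[OF iF])
        show "(\<lambda>t. ?g t + q * ?h t) integrable_on {0..T}"
          by (rule integrable_add[OF ig integrable_on_mult_right[OF ih]])
      qed (rule pw)
      also have "\<dots> = integral {0..T} ?g + q * integral {0..T} ?h"
        using integral_add[OF ig integrable_on_mult_right[OF ih, of q]] by simp
      also have "\<dots> \<le> integral {0..T} ?g + q * C\<^sup>2"
        using intx[OF M] q by (intro add_left_mono mult_left_mono) auto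
      finally show ?thesis unfolding K_def .
    qed
    have "V 1 T (Y i T) = 0" unfolding conjunct1[OF conjunct2[OF conjunct2[OF YU[of i]]]] VT[OF l1] by simp
    then have "V 1 0 (x0 i) \<le> K i" using st ibound YU[of i] by simp
    moreover have "V j 0 (x M i 0) = V j 0 (x0 i)" using x_init[OF M i] by simp
    ultimately have "V j T (x M i T) \<le> K i" using opt jle by linarith
    then have "(M/2) * (norm (x M i T - p j))\<^sup>2 \<le> K i" using VT[OF j[THEN conjunct1]] by simp
    then show ?thesis using j by blast
  qed
  define M0 where "M0 = 2 * Ks / \<epsilon>\<^sup>2 + 1"
  have M0: "M0 > 0"
  proof -
    have "2 * Ks / \<epsilon>\<^sup>2 \<ge> 0" using Ks0 by simp
    then show ?thesis unfolding M0_def by linarith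
  qed
  show "\<exists>M0>0. \<forall>M>M0. \<forall>i\<in>{1..N}. \<exists>j\<in>{1..l}. x M i T \<in> ball (p j) \<epsilon>"
  proof (intro exI[of _ M0] conjI allI impI ballI M0)
    fix M i assume MM: "M0 < M" and i: "i \<in> {1..N}"
    have M: "M > 0" using MM M0 by simp
    obtain j where j: "j \<in> {1..l}" and b: "(M/2) * (norm (x M i T - p j))\<^sup>2 \<le> K i" using claim[OF M i] by blast
    have "(norm (x M i T - p j))\<^sup>2 \<le> 2 * Ks / M"
      using b KKs[OF i] M by (simp add: field_simps)
    also have "\<dots> < \<epsilon>\<^sup>2"
    proof -
      have "2 * Ks < M * \<epsilon>\<^sup>2"
      proof -
        have "2 * Ks / \<epsilon>\<^sup>2 < M" using MM unfolding M0_def by simp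
        then show ?thesis using eps by (simp add: field_simps)
      qed
      then show ?thesis using M by (simp add: field_simps)
    qed
    finally have "norm (x M i T - p j) < \<epsilon>" using eps by (smt (verit) power_mono norm_ge_zero)
    then show "\<exists>j\<in>{1..l}. x M i T \<in> ball (p j) \<epsilon>" using j by (auto simp: dist_norm norm_minus_commute)
  qed
qed

end
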